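(* Let $f\in L^2(\Omega)$ and $g\in L^2(|\boldsymbol\beta\cdot\mathbf n|;\Gamma_-)$. Under Assumption A and $|\boldsymbol\beta|>0$ on $\overline\Omega$, the least-squares problem: find $\boldsymbol\sigma\in H_{g,-}(\mathrm{div};\Omega)$ with $\mathcal J_1(\boldsymbol\sigma;f,g)=\inf_{\boldsymbol\tau\in H_{g,-}(\mathrm{div};\Omega)}\mathcal J_1(\boldsymbol\tau;f,g)$, where $$\mathcal J_1(\boldsymbol\tau;f,g)=\big\|\nabla\cdot\boldsymbol\tau+\tilde\gamma(\boldsymbol\beta\cdot\boldsymbol\tau)-f\big\|_0^2+\sum_{i=1}^{d-1}\|\boldsymbol\tau\cdot\boldsymbol\beta_\perp^{(i)}\|_0^2,$$ has a unique solution $\boldsymbol\sigma\in H_{g,-}(\mathrm{div};\Omega)$.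
   Context: Let $\Omega\subset\mathbb R^d$ ($d=2,3$) be a bounded polyhedral domain with Lipschitz boundary, with unit outward normal $\mathbf n$. Let $\gamma\in L^\infty(\Omega)$ and $\boldsymbol\beta\in[C^1(\overline\Omega)]^d$. The inflow boundary is $\Gamma_-=\{x\in\partial\Omega:\boldsymbol\beta(x)\cdot\mathbf n(x)<0\}$. Let $L^2(|\boldsymbol\beta\cdot\mathbf n|;\Gamma_-)$ be the set of measurable $v$ on $\partial\Omega$ with $\int_{\Gamma_-}|\boldsymbol\beta\cdot\mathbf n|v^2<\infty$, and $W=\{v\in L^2(\Omega):\nabla\cdot(\boldsymbol\beta v)\in L^2(\Omega)\}$. Assumption A: for every $f\in L^2(\Omega)$ and $g\in L^2(|\boldsymbol\beta\cdot\mathbf n|;\Gamma_-)$ the problem $\nabla\cdot(\boldsymbol\beta u)+\gamma u=f$ in $\Omega$, $u=g$ on $\Gamma_-$ has a unique solution $u\in W$. Define $H_{g,-}(\mathrm{div};\Omega)=\{\boldsymbol\tau\in H(\mathrm{div};\Omega):\boldsymbol\tau\cdot\mathbf n=(\boldsymbol\beta\cdot\mathbf n)g\text{ on }\Gamma_-\}$ and $H_{0,-}(\mathrm{div};\Omega)$ the case $g=0$. Assume $|\boldsymbol\beta(x)|>0$ for all $x\in\overline\Omega$, put $\tilde\gamma=\gamma/|\boldsymbol\beta|^2$, and let $\boldsymbol\beta_\perp^{(1)},\dots,\boldsymbol\beta_\perp^{(d-1)}$ be measurable vector fields with $\boldsymbol\beta\cdot\boldsymbol\beta_\perp^{(i)}=0$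 and $\boldsymbol\beta_\perp^{(i)}\cdot\boldsymbol\beta_\perp^{(j)}=\delta_{ij}$ pointwise. $\|\cdot\|_0$ denotes the $L^2(\Omega)$ norm. *)

theory Defs
  imports "HOL-Analysis.Analysis"
begin

text \<open>Strong Lipschitz boundary: locally the domain lies below the graph of a
Lipschitz function in some direction e.\<close>
definition lipschitz_boundary :: "('a::euclidean_space) set \<Rightarrow> bool" where
  "lipschitz_boundary \<Omega> \<longleftrightarrow>
     (\<forall>x\<in>frontier \<Omega>. \<exists>e r L (h::'a \<Rightarrow> real).
        norm e = 1 \<and> r > 0 \<and> L-lipschitz_on UNIV h \<and>
        (\<forall>y t. h (y + t *\<^sub>R e) = h y) \<and>
        ball x r \<inter> \<Omega> = {y \<in> ball x r. y \<bullet> e < h y})"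

definition polyhedral_lipschitz_domain :: "('a::euclidean_space) set \<Rightarrow> bool" where
  "polyhedral_lipschitz_domain \<Omega> \<longleftrightarrow>
     open \<Omega> \<and> connected \<Omega> \<and> \<Omega> \<noteq> {} \<and> bounded \<Omega> \<and>
     (\<exists>P. finite P \<and> (\<forall>p\<in>P. polytope p) \<and> closure \<Omega> = \<Union>P) \<and>
     lipschitz_boundary \<Omega>"

definition hausdorff_pre :: "real \<Rightarrow> real \<Rightarrow> ('a::euclidean_space) set \<Rightarrow> ennreal" where
  "hausdorff_pre s \<delta> A =
     (INF C \<in> {C :: nat \<Rightarrow> 'a set. A \<subseteq> \<Union>(range C) \<and>
                 (\<forall>i. bounded (C i) \<and> diameter (C i) \<le> \<delta>)}.
        (\<Sum>i. ennreal (unit_ball_vol s * (diameter (C i) / 2) powr s)))"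

definition hausdorff :: "real \<Rightarrow> ('a::euclidean_space) set \<Rightarrow> ennreal" where
  "hausdorff s A = (SUP \<delta> \<in> {0<..}. hausdorff_pre s \<delta> A)"

definition surf :: "(real ^ 'n) set \<Rightarrow> (real ^ 'n) measure" where
  "surf \<Omega> = measure_of (frontier \<Omega>) {A. A \<subseteq> frontier \<Omega> \<and> A \<in> sets borel}
              (hausdorff (real CARD('n) - 1))"

definition outward_normal :: "('a::euclidean_space) set \<Rightarrow> 'a \<Rightarrow> 'a \<Rightarrow> bool" where
  "outward_normal \<Omega> x n \<longleftrightarrow> norm n = 1 \<and>
     (\<exists>\<epsilon>>0. ball x \<epsilon> \<inter> \<Omega> = {y \<in> ball x \<epsilon>. (y - x) \<bullet> n < 0})"

definition nrm :: "('a::euclidean_space) set \<Rightarrow> 'a \<Rightarrow> 'a" where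
  "nrm \<Omega> x = (SOME n. outward_normal \<Omega> x n)"

definition inflow :: "('a::euclidean_space) set \<Rightarrow> ('a \<Rightarrow> 'a) \<Rightarrow> 'a set" where
  "inflow \<Omega> \<beta> = {x \<in> frontier \<Omega>. \<exists>n. outward_normal \<Omega> x n \<and> \<beta> x \<bullet> n < 0}"

definition L2 :: "'a measure \<Rightarrow> ('a \<Rightarrow> real) \<Rightarrow> bool" where
  "L2 M f \<longleftrightarrow> f \<in> borel_measurable M \<and> integrable M (\<lambda>x. (f x)\<^sup>2)"

definition L2v :: "'a measure \<Rightarrow> ('a \<Rightarrow> 'b::euclidean_space) \<Rightarrow> bool" where
  "L2v M \<tau> \<longleftrightarrow> \<tau> \<in> borel_measurable M \<and> integrable M (\<lambda>x. (norm (\<tau> x))\<^sup>2)"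

definition Linf :: "'a measure \<Rightarrow> ('a \<Rightarrow> real) \<Rightarrow> bool" where
  "Linf M f \<longleftrightarrow> f \<in> borel_measurable M \<and> (\<exists>C. AE x in M. \<bar>f x\<bar> \<le> C)"

definition L2_inflow :: "(real ^ 'n) set \<Rightarrow> (real ^ 'n \<Rightarrow> real ^ 'n) \<Rightarrow> (real ^ 'n \<Rightarrow> real) \<Rightarrow> bool" where
  "L2_inflow \<Omega> \<beta> g \<longleftrightarrow> g \<in> borel_measurable (surf \<Omega>) \<and>
     (\<integral>\<^sup>+ x \<in> inflow \<Omega> \<beta>. ennreal (\<bar>\<beta> x \<bullet> nrm \<Omega> x\<bar> * (g x)\<^sup>2) \<partial>surf \<Omega>) < \<infinity>"

definition C1c :: "('a::euclidean_space \<Rightarrow> real) \<Rightarrow> ('a \<Rightarrow> 'a) \<Rightarrow> bool" where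
  "C1c \<phi> d\<phi> \<longleftrightarrow> (\<forall>x. (\<phi> has_derivative (\<lambda>h. d\<phi> x \<bullet> h)) (at x)) \<and>
     continuous_on UNIV d\<phi> \<and> bounded {x. \<phi> x \<noteq> 0}"

definition has_weak_div :: "('a::euclidean_space) set \<Rightarrow> ('a \<Rightarrow> 'a) \<Rightarrow> ('a \<Rightarrow> real) \<Rightarrow> bool" where
  "has_weak_div \<Omega> \<tau> w \<longleftrightarrow>
     (\<forall>\<phi> d\<phi>. C1c \<phi> d\<phi> \<and> closure {x. \<phi> x \<noteq> 0} \<subseteq> \<Omega> \<longrightarrow>
        (\<integral>x. \<tau> x \<bullet> d\<phi> x \<partial>lebesgue_on \<Omega>) = - (\<integral>x. w x * \<phi> x \<partial>lebesgue_on \<Omega>))"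

definition Hdiv :: "('a::euclidean_space) set \<Rightarrow> ('a \<Rightarrow> 'a) \<Rightarrow> bool" where
  "Hdiv \<Omega> \<tau> \<longleftrightarrow> L2v (lebesgue_on \<Omega>) \<tau> \<and> (\<exists>w. L2 (lebesgue_on \<Omega>) w \<and> has_weak_div \<Omega> \<tau> w)"

definition wdiv :: "('a::euclidean_space) set \<Rightarrow> ('a \<Rightarrow> 'a) \<Rightarrow> 'a \<Rightarrow> real" where
  "wdiv \<Omega> \<tau> = (SOME w. L2 (lebesgue_on \<Omega>) w \<and> has_weak_div \<Omega> \<tau> w)"

text \<open>Weak (Green's formula) meaning of tau.n = (beta.n) g on Gamma_-.\<close>
definition ntrace_inflow :: "(real ^ 'n) set \<Rightarrow> (real ^ 'n \<Rightarrow> real ^ 'n) \<Rightarrow> (real ^ 'n \<Rightarrow> real)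
    \<Rightarrow> (real ^ 'n \<Rightarrow> real ^ 'n) \<Rightarrow> bool" where
  "ntrace_inflow \<Omega> \<beta> g \<tau> \<longleftrightarrow>
     (\<forall>\<phi> d\<phi>. C1c \<phi> d\<phi> \<and> (\<forall>x \<in> frontier \<Omega> - inflow \<Omega> \<beta>. \<phi> x = 0) \<longrightarrow>
        (\<integral>x. wdiv \<Omega> \<tau> x * \<phi> x + \<tau> x \<bullet> d\<phi> x \<partial>lebesgue_on \<Omega>) =
        (\<integral>x. indicator (inflow \<Omega> \<beta>) x * ((\<beta> x \<bullet> nrm \<Omega> x) * g x * \<phi> x) \<partial>surf \<Omega>))"

definition Hg :: "(real ^ 'n) set \<Rightarrow> (real ^ 'n \<Rightarrow> real ^ 'n) \<Rightarrow> (real ^ 'n \<Rightarrow> real)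
    \<Rightarrow> (real ^ 'n \<Rightarrow> real ^ 'n) set" where
  "Hg \<Omega> \<beta> g = {\<tau>. Hdiv \<Omega> \<tau> \<and> ntrace_inflow \<Omega> \<beta> g \<tau>}"

definition Wspace :: "('a::euclidean_space) set \<Rightarrow> ('a \<Rightarrow> 'a) \<Rightarrow> ('a \<Rightarrow> real) set" where
  "Wspace \<Omega> \<beta> = {v. L2 (lebesgue_on \<Omega>) v \<and> Hdiv \<Omega> (\<lambda>x. v x *\<^sub>R \<beta> x)}"

definition transport_sol :: "(real ^ 'n) set \<Rightarrow> (real ^ 'n \<Rightarrow> real ^ 'n) \<Rightarrow> (real ^ 'n \<Rightarrow> real)
    \<Rightarrow> (real ^ 'n \<Rightarrow> real) \<Rightarrow> (real ^ 'n \<Rightarrow> real) \<Rightarrow> (real ^ 'n \<Rightarrow> real) \<Rightarrow> bool" where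
  "transport_sol \<Omega> \<beta> \<gamma> f g u \<longleftrightarrow> u \<in> Wspace \<Omega> \<beta> \<and>
     (AE x in lebesgue_on \<Omega>. wdiv \<Omega> (\<lambda>y. u y *\<^sub>R \<beta> y) x + \<gamma> x * u x = f x) \<and>
     ntrace_inflow \<Omega> \<beta> g (\<lambda>y. u y *\<^sub>R \<beta> y)"

definition assumption_A :: "(real ^ 'n) set \<Rightarrow> (real ^ 'n \<Rightarrow> real ^ 'n) \<Rightarrow> (real ^ 'n \<Rightarrow> real) \<Rightarrow> bool" where
  "assumption_A \<Omega> \<beta> \<gamma> \<longleftrightarrow>
     (\<forall>f g. L2 (lebesgue_on \<Omega>) f \<and> L2_inflow \<Omega> \<beta> g \<longrightarrow>
        (\<exists>u. transport_sol \<Omega> \<beta> \<gamma> f g u) \<and>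
        (\<forall>u v. transport_sol \<Omega> \<beta> \<gamma> f g u \<and> transport_sol \<Omega> \<beta> \<gamma> f g v \<longrightarrow>
            (AE x in lebesgue_on \<Omega>. u x = v x)))"

definition C1_closure :: "('a::euclidean_space) set \<Rightarrow> ('a \<Rightarrow> 'a) \<Rightarrow> bool" where
  "C1_closure \<Omega> \<beta> \<longleftrightarrow> (\<exists>D :: 'a \<Rightarrow> 'a \<Rightarrow>\<^sub>L 'a.
     (\<forall>x\<in>closure \<Omega>. (\<beta> has_derivative blinfun_apply (D x)) (at x)) \<and>
     continuous_on (closure \<Omega>) D)"

definition J1 :: "(real ^ 'n) set \<Rightarrow> (real ^ 'n \<Rightarrow> real ^ 'n) \<Rightarrow> (real ^ 'n \<Rightarrow> real)
    \<Rightarrow> (nat \<Rightarrow> real ^ 'n \<Rightarrow> real ^ 'n) \<Rightarrow> (real ^ 'n \<Rightarrow> real)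
    \<Rightarrow> (real ^ 'n \<Rightarrow> real ^ 'n) \<Rightarrow> real" where
  "J1 \<Omega> \<beta> \<gamma> bp f \<tau> =
     (\<integral>x. (wdiv \<Omega> \<tau> x + (\<gamma> x / (norm (\<beta> x))\<^sup>2) * (\<beta> x \<bullet> \<tau> x) - f x)\<^sup>2 \<partial>lebesgue_on \<Omega>)
     + (\<Sum>i = 1..CARD('n) - 1. \<integral>x. (\<tau> x \<bullet> bp i x)\<^sup>2 \<partial>lebesgue_on \<Omega>)"

end

theory Submission
  imports Defs
begin

lemma perp_parallel:
  fixes v b :: "real ^ 'n" and bp :: "nat \<Rightarrow> real ^ 'n"
  assumes b: "b \<noteq> 0"
    and perp: "\<forall>i\<in>{1..CARD('n) - 1}. b \<bullet> bp i = 0"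
    and on: "\<forall>i\<in>{1..CARD('n) - 1}. \<forall>j\<in>{1..CARD('n) - 1}. bp i \<bullet> bp j = (if i = j then 1 else 0)"
    and vp: "\<forall>i\<in>{1..CARD('n) - 1}. v \<bullet> bp i = 0"
  shows "v = ((b \<bullet> v) / (norm b)\<^sup>2) *\<^sub>R b"
proof -
  define I where "I = {1..CARD('n) - 1}"
  define S where "S = insert b (bp ` I)"
  have inj: "inj_on bp I"
    by (rule inj_onI) (metis on[folded I_def] one_neq_zero)
  have bnot: "b \<notin> bp ` I" using perp b unfolding I_def by auto
  have fin: "finite S" unfolding S_def I_def by auto
  have cardS: "card S = CARD('n)"
    unfolding S_def using bnot inj card_image[OF inj] unfolding I_def by simp
  have po: "pairwise orthogonal S"
    unfolding S_def pairwise_def orthogonal_def using perp on unfolding I_def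
    by (auto simp: inner_commute)
  have z: "0 \<notin> S" unfolding S_def using b on unfolding I_def by force
  have ind: "independent S" by (rule pairwise_orthogonal_independent[OF po z])
  have "UNIV \<subseteq> span S"
    using card_eq_dim[of S UNIV] fin cardS ind by simp
  define w where "w = v - ((b \<bullet> v) / (norm b)\<^sup>2) *\<^sub>R b"
  have "\<And>y. y \<in> S \<Longrightarrow> orthogonal w y"
  proof -
    fix y assume "y \<in> S"
    then consider "y = b" | i where "i \<in> I" "y = bp i" unfolding S_def by auto
    then show "orthogonal w y"
    proof cases
      case 1
      then show ?thesis using b unfolding w_def orthogonal_def
        by (simp add: inner_diff_left inner_diff_right power2_norm_eq_inner inner_commute)
    next
      case 2
      then show ?thesis using perp vp unfolding w_def orthogonal_def I_def
        by (simp add: inner_diff_left)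
    qed
  qed
  then have "orthogonal w w" using orthogonal_to_span \<open>UNIV \<subseteq> span S\<close> by blast
  then have "w = 0" by (simp add: orthogonal_def)
  then show ?thesis unfolding w_def by simp
qed


lemma C1c_meas:
  assumes "C1c \<phi> d\<phi>" and S: "S \<in> sets lebesgue"
  shows "\<phi> \<in> borel_measurable (lebesgue_on S)" "d\<phi> \<in> borel_measurable (lebesgue_on S)"
proof -
  have "\<forall>x. isCont \<phi> x" using assms(1) unfolding C1c_def
    using has_derivative_continuous by blast
  then have "continuous_on S \<phi>" by (simp add: continuous_at_imp_continuous_on)
  then show "\<phi> \<in> borel_measurable (lebesgue_on S)"
    using continuous_imp_measurable_on_sets_lebesgue S by blast
  have "continuous_on S d\<phi>" using assms(1) unfolding C1c_def
    using continuous_on_subset by blast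
  then show "d\<phi> \<in> borel_measurable (lebesgue_on S)"
    using continuous_imp_measurable_on_sets_lebesgue S by blast
qed

lemma weak_div_cong:
  fixes t1 t2 :: "'a::euclidean_space \<Rightarrow> 'a"
  assumes S: "S \<in> sets lebesgue"
    and m1: "t1 \<in> borel_measurable (lebesgue_on S)"
    and m2: "t2 \<in> borel_measurable (lebesgue_on S)"
    and ae: "AE x in lebesgue_on S. t1 x = t2 x"
  shows "has_weak_div S t1 = has_weak_div S t2"
proof -
  have "(\<integral>x. t1 x \<bullet> d\<phi> x \<partial>lebesgue_on S) = (\<integral>x. t2 x \<bullet> d\<phi> x \<partial>lebesgue_on S)"
    if "C1c \<phi> d\<phi>" for \<phi> d\<phi>
  proof -
    note [measurable] = C1c_meas[OF that S] m1 m2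
    show ?thesis by (rule integral_cong_AE) (use ae in auto)
  qed
  then show ?thesis unfolding has_weak_div_def by (intro ext) (metis (no_types, lifting))
qed

lemma wdiv_cong:
  fixes t1 t2 :: "'a::euclidean_space \<Rightarrow> 'a"
  assumes S: "S \<in> sets lebesgue"
    and m1: "t1 \<in> borel_measurable (lebesgue_on S)"
    and m2: "t2 \<in> borel_measurable (lebesgue_on S)"
    and ae: "AE x in lebesgue_on S. t1 x = t2 x"
  shows "wdiv S t1 = wdiv S t2"
  unfolding wdiv_def weak_div_cong[OF assms] ..

lemma Hdiv_cong:
  fixes t1 t2 :: "'a::euclidean_space \<Rightarrow> 'a"
  assumes S: "S \<in> sets lebesgue"
    and m1: "t1 \<in> borel_measurable (lebesgue_on S)"
    and m2: "t2 \<in> borel_measurable (lebesgue_on S)"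
    and ae: "AE x in lebesgue_on S. t1 x = t2 x"
  shows "Hdiv S t1 = Hdiv S t2"
proof -
  have "integrable (lebesgue_on S) (\<lambda>x. (norm (t1 x))\<^sup>2) = integrable (lebesgue_on S) (\<lambda>x. (norm (t2 x))\<^sup>2)"
    by (rule integrable_cong_AE) (use ae m1 m2 in auto)
  then show ?thesis unfolding Hdiv_def L2v_def weak_div_cong[OF assms] using m1 m2 by auto
qed

lemma ntrace_cong:
  fixes t1 t2 :: "real ^ 'n \<Rightarrow> real ^ 'n"
  assumes S: "S \<in> sets lebesgue"
    and m1: "t1 \<in> borel_measurable (lebesgue_on S)"
    and m2: "t2 \<in> borel_measurable (lebesgue_on S)"
    and ae: "AE x in lebesgue_on S. t1 x = t2 x"
    and w: "wdiv S t1 \<in> borel_measurable (lebesgue_on S)"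
  shows "ntrace_inflow S \<beta> g t1 = ntrace_inflow S \<beta> g t2"
proof -
  have "(\<integral>x. wdiv S t1 x * \<phi> x + t1 x \<bullet> d\<phi> x \<partial>lebesgue_on S) = (\<integral>x. wdiv S t2 x * \<phi> x + t2 x \<bullet> d\<phi> x \<partial>lebesgue_on S)"
    if "C1c \<phi> d\<phi>" for \<phi> d\<phi>
  proof -
    note [measurable] = C1c_meas[OF that S] m1 m2 w
    show ?thesis unfolding wdiv_cong[OF S m1 m2 ae, symmetric]
      by (rule integral_cong_AE) (use ae in auto)
  qed
  then show ?thesis unfolding ntrace_inflow_def by auto
qed

lemma sq3: "((a::real) + b - c)\<^sup>2 \<le> 3 * (a\<^sup>2 + b\<^sup>2 + c\<^sup>2)"
proof -
  have "3 * (a\<^sup>2 + b\<^sup>2 + c\<^sup>2) - (a + b - c)\<^sup>2 = (a - b)\<^sup>2 + (a + c)\<^sup>2 + (b + c)\<^sup>2"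
    by (simp add: power2_eq_square algebra_simps)
  moreover have "0 \<le> (a - b)\<^sup>2 + (a + c)\<^sup>2 + (b + c)\<^sup>2" by simp
  ultimately show ?thesis by linarith
qed



lemma b_bound:
  fixes g s bb m C :: real
  assumes "m > 0" "m \<le> nb" "\<bar>g\<bar> \<le> C" "\<bar>bs\<bar> \<le> nb * s" "s \<ge> 0"
  shows "(g / nb\<^sup>2 * bs)\<^sup>2 \<le> (C / m)\<^sup>2 * s\<^sup>2"
proof -
  have nb: "nb > 0" using assms by linarith
  have C: "C \<ge> 0" using assms(3) by linarith
  have "\<bar>g / nb\<^sup>2 * bs\<bar> = \<bar>g\<bar> * \<bar>bs\<bar> / nb\<^sup>2" by (simp add: abs_mult)
  also have "\<dots> \<le> C * (nb * s) / nb\<^sup>2"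
    using nb assms by (intro divide_right_mono mult_mono) auto
  also have "\<dots> = C * s / nb" using nb by (simp add: power2_eq_square)
  also have "\<dots> \<le> C * s / m" using nb assms C by (intro divide_left_mono) auto
  finally have "\<bar>g / nb\<^sup>2 * bs\<bar> \<le> C / m * s" by simp
  then have "\<bar>g / nb\<^sup>2 * bs\<bar>\<^sup>2 \<le> (C / m * s)\<^sup>2" by (intro power_mono) auto
  then show ?thesis by (metis power2_abs power_mult_distrib)
qed

lemma u_bound:
  fixes m nb bs s :: real
  assumes "m > 0" "m \<le> nb" "\<bar>bs\<bar> \<le> nb * s" "s \<ge> 0"
  shows "(bs / nb\<^sup>2)\<^sup>2 \<le> (1 / m)\<^sup>2 * s\<^sup>2"
  using b_bound[of m nb 1 1 bs s] assms by simp

lemma J1_nonneg: "J1 \<Omega> \<beta> \<gamma> bp f \<tau> \<ge> 0"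
  unfolding J1_def by (intro add_nonneg_nonneg sum_nonneg integral_nonneg_AE) auto



lemma aux3: "(a::real) \<le> 3*(w+b+c) \<Longrightarrow> b \<le> b' \<Longrightarrow> a \<le> 3*(w+b'+c)" by (smt (verit))

theorem theorem3p2:
  fixes \<Omega> :: "(real ^ 'n) set"
    and \<beta> :: "real ^ 'n \<Rightarrow> real ^ 'n"
    and \<gamma> f g :: "real ^ 'n \<Rightarrow> real"
    and bp :: "nat \<Rightarrow> real ^ 'n \<Rightarrow> real ^ 'n"
  assumes dim: "CARD('n) = 2 \<or> CARD('n) = 3"
    and dom: "polyhedral_lipschitz_domain \<Omega>"
    and gam: "Linf (lebesgue_on \<Omega>) \<gamma>"
    and bet: "C1_closure \<Omega> \<beta>"
    and bet_pos: "\<forall>x\<in>closure \<Omega>. norm (\<beta> x) > 0"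
    and bp_meas: "\<forall>i\<in>{1..CARD('n) - 1}. bp i \<in> borel_measurable (lebesgue_on \<Omega>)"
    and bp_perp: "\<forall>i\<in>{1..CARD('n) - 1}. \<forall>x\<in>\<Omega>. \<beta> x \<bullet> bp i x = 0"
    and bp_on: "\<forall>i\<in>{1..CARD('n) - 1}. \<forall>j\<in>{1..CARD('n) - 1}. \<forall>x\<in>\<Omega>.
                  bp i x \<bullet> bp j x = (if i = j then 1 else 0)"
    and A: "assumption_A \<Omega> \<beta> \<gamma>"
    and f: "L2 (lebesgue_on \<Omega>) f"
    and g: "L2_inflow \<Omega> \<beta> g"
  shows "\<exists>\<sigma>. \<sigma> \<in> Hg \<Omega> \<beta> g \<and> (\<forall>\<tau>\<in>Hg \<Omega> \<beta> g. J1 \<Omega> \<beta> \<gamma> bp f \<sigma> \<le> J1 \<Omega> \<beta> \<gamma> bp f \<tau>) \<and>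
           (\<forall>\<sigma>'. \<sigma>' \<in> Hg \<Omega> \<beta> g \<and> (\<forall>\<tau>\<in>Hg \<Omega> \<beta> g. J1 \<Omega> \<beta> \<gamma> bp f \<sigma>' \<le> J1 \<Omega> \<beta> \<gamma> bp f \<tau>)
              \<longrightarrow> (AE x in lebesgue_on \<Omega>. \<sigma>' x = \<sigma> x))"
proof -
  let ?M = "lebesgue_on \<Omega>"
  define I where "I = {1..CARD('n) - 1}"
  have opn: "open \<Omega>" and ne: "\<Omega> \<noteq> {}" and bdd: "bounded \<Omega>"
    using dom unfolding polyhedral_lipschitz_domain_def by auto
  have S: "\<Omega> \<in> sets lebesgue" using opn by (simp add: borel_open)
  obtain D where D: "\<forall>x\<in>closure \<Omega>. (\<beta> has_derivative blinfun_apply (D x)) (at x)"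
    using bet unfolding C1_closure_def by blast
  have contc: "continuous_on (closure \<Omega>) \<beta>"
    using D has_derivative_continuous by (blast intro: continuous_at_imp_continuous_on)
  then have cont: "continuous_on \<Omega> \<beta>" using closure_subset continuous_on_subset by blast
  have bmeas[measurable]: "\<beta> \<in> borel_measurable ?M"
    using continuous_imp_measurable_on_sets_lebesgue[OF cont S] .
  have "continuous_on (closure \<Omega>) (\<lambda>x. norm (\<beta> x))" using contc by (intro continuous_intros)
  then obtain x0 where x0: "x0 \<in> closure \<Omega>" "\<forall>y\<in>closure \<Omega>. norm (\<beta> x0) \<le> norm (\<beta> y)"
    using continuous_attains_inf[of "closure \<Omega>" "\<lambda>x. norm (\<beta> x)"] bdd ne
    by (auto simp: compact_closure)
  define m where "m = norm (\<beta> x0)"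
  have m: "m > 0" using bet_pos x0 unfolding m_def by auto
  have mle: "\<And>x. x \<in> \<Omega> \<Longrightarrow> m \<le> norm (\<beta> x)" using x0 closure_subset unfolding m_def by blast
  have bnz: "\<And>x. x \<in> \<Omega> \<Longrightarrow> \<beta> x \<noteq> 0" using mle m by fastforce
  have gmeas[measurable]: "\<gamma> \<in> borel_measurable ?M" using gam unfolding Linf_def by auto
  obtain C0 where C0: "AE x in ?M. \<bar>\<gamma> x\<bar> \<le> C0" using gam unfolding Linf_def by auto
  define C where "C = max C0 0"
  have C: "AE x in ?M. \<bar>\<gamma> x\<bar> \<le> C" using C0 unfolding C_def by (auto elim: AE_mp)
  have fmeas[measurable]: "f \<in> borel_measurable ?M" and fint: "integrable ?M (\<lambda>x. (f x)\<^sup>2)"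
    using f unfolding L2_def by auto
  have bpm[measurable]: "\<And>i. i \<in> I \<Longrightarrow> bp i \<in> borel_measurable ?M" using bp_meas I_def by auto

  have Afg: "(\<exists>u. transport_sol \<Omega> \<beta> \<gamma> f g u) \<and>
        (\<forall>u v. transport_sol \<Omega> \<beta> \<gamma> f g u \<and> transport_sol \<Omega> \<beta> \<gamma> f g v \<longrightarrow>
            (AE x in lebesgue_on \<Omega>. u x = v x))"
    using mp[OF spec[OF spec[OF A[unfolded assumption_A_def], of f], of g]] f g by blast
  have Auniq: "\<And>u v. transport_sol \<Omega> \<beta> \<gamma> f g u \<Longrightarrow> transport_sol \<Omega> \<beta> \<gamma> f g v \<Longrightarrow>
            (AE x in lebesgue_on \<Omega>. u x = v x)" using Afg by blast
  obtain u where u: "transport_sol \<Omega> \<beta> \<gamma> f g u"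
    using Afg by blast
  define \<sigma> where "\<sigma> = (\<lambda>y. u y *\<^sub>R \<beta> y)"
  have \<sigma>Hg: "\<sigma> \<in> Hg \<Omega> \<beta> g"
    using u unfolding Hg_def transport_sol_def Wspace_def \<sigma>_def by auto
  have J\<sigma>: "J1 \<Omega> \<beta> \<gamma> bp f \<sigma> = 0"
  proof -
    have ae: "AE x in ?M. wdiv \<Omega> \<sigma> x + \<gamma> x * u x = f x"
      using u unfolding transport_sol_def \<sigma>_def by auto
    have "AE x in ?M. (wdiv \<Omega> \<sigma> x + (\<gamma> x / (norm (\<beta> x))\<^sup>2) * (\<beta> x \<bullet> \<sigma> x) - f x)\<^sup>2 = 0"
      using ae
    proof (rule AE_mp, intro AE_I2 impI)
      fix x assume x: "x \<in> space ?M" and e: "wdiv \<Omega> \<sigma> x + \<gamma> x * u x = f x"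
      have "\<beta> x \<noteq> 0" using bnz x by simp
      then have "(\<gamma> x / (norm (\<beta> x))\<^sup>2) * (\<beta> x \<bullet> \<sigma> x) = \<gamma> x * u x"
        unfolding \<sigma>_def by (simp add: power2_norm_eq_inner)
      then show "(wdiv \<Omega> \<sigma> x + (\<gamma> x / (norm (\<beta> x))\<^sup>2) * (\<beta> x \<bullet> \<sigma> x) - f x)\<^sup>2 = 0"
        using e by simp
    qed
    then have 1: "(\<integral>x. (wdiv \<Omega> \<sigma> x + (\<gamma> x / (norm (\<beta> x))\<^sup>2) * (\<beta> x \<bullet> \<sigma> x) - f x)\<^sup>2 \<partial>?M) = 0"
      by (rule integral_eq_zero_AE)
    have 2: "(\<integral>x. (\<sigma> x \<bullet> bp i x)\<^sup>2 \<partial>?M) = 0" if "i \<in> {1..CARD('n) - 1}" for i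
      by (rule integral_eq_zero_AE) (use bp_perp that in \<open>auto simp: \<sigma>_def inner_commute\<close>)
    show ?thesis unfolding J1_def using 1 2 by simp
  qed
  have min: "\<forall>\<tau>\<in>Hg \<Omega> \<beta> g. J1 \<Omega> \<beta> \<gamma> bp f \<sigma> \<le> J1 \<Omega> \<beta> \<gamma> bp f \<tau>"
    using J\<sigma> J1_nonneg by metis

  have uniq: "AE x in ?M. \<sigma>' x = \<sigma> x"
    if s'Hg: "\<sigma>' \<in> Hg \<Omega> \<beta> g" and s'min: "\<forall>\<tau>\<in>Hg \<Omega> \<beta> g. J1 \<Omega> \<beta> \<gamma> bp f \<sigma>' \<le> J1 \<Omega> \<beta> \<gamma> bp f \<tau>"
    for \<sigma>'
  proof -
    have J0: "J1 \<Omega> \<beta> \<gamma> bp f \<sigma>' = 0" using s'min \<sigma>Hg J\<sigma> J1_nonneg[of \<Omega> \<beta> \<gamma> bp f \<sigma>'] by force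
    have Hd: "Hdiv \<Omega> \<sigma>'" and tr: "ntrace_inflow \<Omega> \<beta> g \<sigma>'" using s'Hg unfolding Hg_def by auto
    have smeas[measurable]: "\<sigma>' \<in> borel_measurable ?M" and sint: "integrable ?M (\<lambda>x. (norm (\<sigma>' x))\<^sup>2)"
      using Hd unfolding Hdiv_def L2v_def by auto
    have wL2: "L2 ?M (wdiv \<Omega> \<sigma>')" and wwd: "has_weak_div \<Omega> \<sigma>' (wdiv \<Omega> \<sigma>')"
      using Hd someI_ex[of "\<lambda>w. L2 ?M w \<and> has_weak_div \<Omega> \<sigma>' w"] unfolding Hdiv_def wdiv_def by auto
    have wmeas[measurable]: "wdiv \<Omega> \<sigma>' \<in> borel_measurable ?M" and wint: "integrable ?M (\<lambda>x. (wdiv \<Omega> \<sigma>' x)\<^sup>2)"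
      using wL2 unfolding L2_def by auto
    define r where "r = (\<lambda>x. wdiv \<Omega> \<sigma>' x + (\<gamma> x / (norm (\<beta> x))\<^sup>2) * (\<beta> x \<bullet> \<sigma>' x) - f x)"
    have rmeas[measurable]: "r \<in> borel_measurable ?M" unfolding r_def by measurable
    have rint: "integrable ?M (\<lambda>x. (r x)\<^sup>2)"
    proof (rule Bochner_Integration.integrable_bound[where f="\<lambda>x. 3 * ((wdiv \<Omega> \<sigma>' x)\<^sup>2 + (C / m)\<^sup>2 * (norm (\<sigma>' x))\<^sup>2 + (f x)\<^sup>2)"])
      show "integrable ?M (\<lambda>x. 3 * ((wdiv \<Omega> \<sigma>' x)\<^sup>2 + (C / m)\<^sup>2 * (norm (\<sigma>' x))\<^sup>2 + (f x)\<^sup>2))"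
        using wint sint fint by (intro integrable_mult_right integrable_add) auto
      show "(\<lambda>x. (r x)\<^sup>2) \<in> borel_measurable ?M" by measurable
      show "AE x in ?M. norm ((r x)\<^sup>2) \<le> norm (3 * ((wdiv \<Omega> \<sigma>' x)\<^sup>2 + (C / m)\<^sup>2 * (norm (\<sigma>' x))\<^sup>2 + (f x)\<^sup>2))"
        using C
      proof (rule AE_mp, intro AE_I2 impI)
        fix x assume x: "x \<in> space ?M" and Cx: "\<bar>\<gamma> x\<bar> \<le> C"
        have "((\<gamma> x / (norm (\<beta> x))\<^sup>2) * (\<beta> x \<bullet> \<sigma>' x))\<^sup>2 \<le> (C / m)\<^sup>2 * (norm (\<sigma>' x))\<^sup>2"
          using x mle[of x] m Cx Cauchy_Schwarz_ineq2[of "\<beta> x" "\<sigma>' x"]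
          by (intro b_bound) auto
        then have "(r x)\<^sup>2 \<le> 3 * ((wdiv \<Omega> \<sigma>' x)\<^sup>2 + (C / m)\<^sup>2 * (norm (\<sigma>' x))\<^sup>2 + (f x)\<^sup>2)"
          unfolding r_def by (rule aux3[OF sq3])
        then show "norm ((r x)\<^sup>2) \<le> norm (3 * ((wdiv \<Omega> \<sigma>' x)\<^sup>2 + (C / m)\<^sup>2 * (norm (\<sigma>' x))\<^sup>2 + (f x)\<^sup>2))"
          by simp
      qed
    qed
    have pint: "integrable ?M (\<lambda>x. (\<sigma>' x \<bullet> bp i x)\<^sup>2)" if i: "i \<in> I" for i
    proof (rule Bochner_Integration.integrable_bound[where f="\<lambda>x. (norm (\<sigma>' x))\<^sup>2"])
      show "integrable ?M (\<lambda>x. (norm (\<sigma>' x))\<^sup>2)" by (rule sint)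
      show "(\<lambda>x. (\<sigma>' x \<bullet> bp i x)\<^sup>2) \<in> borel_measurable ?M" using bpm[OF i] by measurable
      show "AE x in ?M. norm ((\<sigma>' x \<bullet> bp i x)\<^sup>2) \<le> norm ((norm (\<sigma>' x))\<^sup>2)"
      proof (intro AE_I2)
        fix x assume x: "x \<in> space ?M"
        have "norm (bp i x) = 1" using bp_on i x unfolding I_def by (auto simp: norm_eq_1)
        then have "\<bar>\<sigma>' x \<bullet> bp i x\<bar> \<le> norm (\<sigma>' x)" using Cauchy_Schwarz_ineq2[of "\<sigma>' x" "bp i x"] by simp
        then have "\<bar>\<sigma>' x \<bullet> bp i x\<bar>\<^sup>2 \<le> (norm (\<sigma>' x))\<^sup>2" by (intro power_mono) auto
        then show "norm ((\<sigma>' x \<bullet> bp i x)\<^sup>2) \<le> norm ((norm (\<sigma>' x))\<^sup>2)" by simp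
      qed
    qed
    have t1: "(\<integral>x. (r x)\<^sup>2 \<partial>?M) \<ge> 0" by (intro integral_nonneg_AE) auto
    have t2: "\<And>i. (\<integral>x. (\<sigma>' x \<bullet> bp i x)\<^sup>2 \<partial>?M) \<ge> 0" by (intro integral_nonneg_AE) auto
    have eq: "(\<integral>x. (r x)\<^sup>2 \<partial>?M) + (\<Sum>i\<in>I. \<integral>x. (\<sigma>' x \<bullet> bp i x)\<^sup>2 \<partial>?M) = 0"
      using J0 unfolding J1_def r_def I_def .
    have "(\<Sum>i\<in>I. \<integral>x. (\<sigma>' x \<bullet> bp i x)\<^sup>2 \<partial>?M) \<ge> 0" using t2 by (intro sum_nonneg) auto
    then have e1: "(\<integral>x. (r x)\<^sup>2 \<partial>?M) = 0" and e2: "(\<Sum>i\<in>I. \<integral>x. (\<sigma>' x \<bullet> bp i x)\<^sup>2 \<partial>?M) = 0"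
      using eq t1 by linarith+
    have e3: "\<And>i. i \<in> I \<Longrightarrow> (\<integral>x. (\<sigma>' x \<bullet> bp i x)\<^sup>2 \<partial>?M) = 0"
    proof -
      have fI: "finite I" unfolding I_def by simp
      show "\<And>i. i \<in> I \<Longrightarrow> (\<integral>x. (\<sigma>' x \<bullet> bp i x)\<^sup>2 \<partial>?M) = 0"
        using iffD1[OF sum_nonneg_eq_0_iff[OF fI, of "\<lambda>i. \<integral>x. (\<sigma>' x \<bullet> bp i x)\<^sup>2 \<partial>?M"] e2] t2 by blast
    qed
    have aer: "AE x in ?M. r x = 0"
      using e1 integral_nonneg_eq_0_iff_AE[OF rint] by auto
    have aep: "AE x in ?M. \<forall>i\<in>I. \<sigma>' x \<bullet> bp i x = 0"
    proof (rule AE_finite_allI)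
      show "finite I" unfolding I_def by simp
      fix i assume i: "i \<in> I"
      show "AE x in ?M. \<sigma>' x \<bullet> bp i x = 0"
        using e3[OF i] integral_nonneg_eq_0_iff_AE[OF pint[OF i]] by auto
    qed
    define u' where "u' = (\<lambda>x. (\<beta> x \<bullet> \<sigma>' x) / (norm (\<beta> x))\<^sup>2)"
    define \<sigma>'' where "\<sigma>'' = (\<lambda>y. u' y *\<^sub>R \<beta> y)"
    have u'meas[measurable]: "u' \<in> borel_measurable ?M" unfolding u'_def by measurable
    have s''meas[measurable]: "\<sigma>'' \<in> borel_measurable ?M" unfolding \<sigma>''_def by measurable
    have aes: "AE x in ?M. \<sigma>'' x = \<sigma>' x"
      using aep
    proof (rule AE_mp, intro AE_I2 impI)
      fix x assume x: "x \<in> space ?M" and p: "\<forall>i\<in>I. \<sigma>' x \<bullet> bp i x = 0"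
      have x\<Omega>: "x \<in> \<Omega>" using x by simp
      have a1: "\<forall>i\<in>{1..CARD('n) - 1}. \<beta> x \<bullet> bp i x = 0" using bp_perp x\<Omega> by blast
      have a2: "\<forall>i\<in>{1..CARD('n) - 1}. \<forall>j\<in>{1..CARD('n) - 1}. bp i x \<bullet> bp j x = (if i = j then 1 else 0)"
        using bp_on x\<Omega> by blast
      have a3: "\<forall>i\<in>{1..CARD('n) - 1}. \<sigma>' x \<bullet> bp i x = 0" using p unfolding I_def .
      have "\<sigma>' x = ((\<beta> x \<bullet> \<sigma>' x) / (norm (\<beta> x))\<^sup>2) *\<^sub>R \<beta> x"
        by (rule perp_parallel[OF bnz[OF x\<Omega>] a1 a2 a3])
      then show "\<sigma>'' x = \<sigma>' x" unfolding \<sigma>''_def u'_def by simp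
    qed
    have wd_eq: "wdiv \<Omega> \<sigma>'' = wdiv \<Omega> \<sigma>'" by (rule wdiv_cong[OF S s''meas smeas aes])
    have Hd'': "Hdiv \<Omega> \<sigma>''" unfolding Hdiv_cong[OF S s''meas smeas aes] by (rule Hd)
    have w'': "wdiv \<Omega> \<sigma>'' \<in> borel_measurable ?M" unfolding wd_eq by (rule wmeas)
    have tr'': "ntrace_inflow \<Omega> \<beta> g \<sigma>''"
      unfolding ntrace_cong[OF S s''meas smeas aes w''] by (rule tr)
    have u'L2: "L2 ?M u'"
      unfolding L2_def
    proof (intro conjI u'meas, rule Bochner_Integration.integrable_bound[where f="\<lambda>x. (1 / m)\<^sup>2 * (norm (\<sigma>' x))\<^sup>2"])
      show "integrable ?M (\<lambda>x. (1 / m)\<^sup>2 * (norm (\<sigma>' x))\<^sup>2)" using sint by auto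
      show "(\<lambda>x. (u' x)\<^sup>2) \<in> borel_measurable ?M" by measurable
      show "AE x in ?M. norm ((u' x)\<^sup>2) \<le> norm ((1 / m)\<^sup>2 * (norm (\<sigma>' x))\<^sup>2)"
      proof (intro AE_I2)
        fix x assume x: "x \<in> space ?M"
        have "(u' x)\<^sup>2 \<le> (1 / m)\<^sup>2 * (norm (\<sigma>' x))\<^sup>2"
          unfolding u'_def using x mle[of x] m Cauchy_Schwarz_ineq2[of "\<beta> x" "\<sigma>' x"]
          by (intro u_bound) auto
        then show "norm ((u' x)\<^sup>2) \<le> norm ((1 / m)\<^sup>2 * (norm (\<sigma>' x))\<^sup>2)" by simp
      qed
    qed
    have ts: "transport_sol \<Omega> \<beta> \<gamma> f g u'"
      unfolding transport_sol_def Wspace_def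
    proof (intro conjI CollectI)
      show "L2 ?M u'" by (rule u'L2)
      show "Hdiv \<Omega> (\<lambda>x. u' x *\<^sub>R \<beta> x)" using Hd'' unfolding \<sigma>''_def .
      show "ntrace_inflow \<Omega> \<beta> g (\<lambda>y. u' y *\<^sub>R \<beta> y)" using tr'' unfolding \<sigma>''_def .
      show "AE x in ?M. wdiv \<Omega> (\<lambda>y. u' y *\<^sub>R \<beta> y) x + \<gamma> x * u' x = f x"
        using aer
      proof (rule AE_mp, intro AE_I2 impI)
        fix x assume x: "x \<in> space ?M" and rx: "r x = 0"
        have "\<gamma> x * u' x = (\<gamma> x / (norm (\<beta> x))\<^sup>2) * (\<beta> x \<bullet> \<sigma>' x)" unfolding u'_def by simp
        then show "wdiv \<Omega> (\<lambda>y. u' y *\<^sub>R \<beta> y) x + \<gamma> x * u' x = f x"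
          using rx wd_eq unfolding r_def \<sigma>''_def by simp
      qed
    qed
    have "AE x in ?M. u' x = u x"
      using Auniq ts u by blast
    then show ?thesis using aes
      by eventually_elim (simp add: \<sigma>''_def \<sigma>_def)
  qed
  show ?thesis using \<sigma>Hg min uniq by blast
qed


end
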